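(* Suppose in addition that $P$ is twice continuously differentiable. Then, for every $\alpha\in[0,1)$, the efficient mechanism $M_e$ is dominated.
   Context: Setting. Let $\Theta=[\underline\theta,\overline\theta]$ with $0<\underline\theta<\overline\theta$. Let $c>0$ and let $P:\mathbb R_+\to\mathbb R_+$ be continuous and strictly decreasing with $P(\overline q)=0$ for some $\overline q>0$. Put $V(q)=\int_0^q P(z)\,dz$ and $\mathrm{TS}(\theta,q)=V(q)-c-\theta q$ for $q>0$, $\mathrm{TS}(\theta,0)=0$. Assume (A2): $\mathrm{TS}(\overline\theta,P^{-1}(\overline\theta))>0$. A mechanism is a triple $M=(r,q,u)$ of functions $r:\Theta\to[0,1]$, $q:\Theta\to[0,\overline q]$, $u:\Theta\to\mathbb R$ with $q(\theta)=0$ if and only if $r(\theta)=0$. It is IC if $u(\theta)\ge u(\theta')+(\theta'-\theta)q(\theta')r(\theta')$ for all $\theta,\theta'\in\Theta$, and IR if $u(\theta)\ge 0$ for all $\theta$. (Known fact: $M$ is IC iff $\theta\mapsto q(\theta)r(\theta)$ is nonincreasing and $u(\theta)=u(\overline\theta)+\int_\theta^{\overline\theta}q(z)r(z)\,dz$ for all $\theta$; an IC mechanism is IR iff $u(\overline\theta)\ge0$.) For $\alpha\in[0,1)$, the regulator's surplus at $\theta$ is $\mathrm{RS}_\alpha(\theta,M)=r(\theta)\,\mathrm{TS}(\theta,q(\theta))-(1-\alpha)u(\theta)$. An IC and IR mechanism $\tilde M$ dominates an IC and IR mechanism $M$ if $\mathrm{RS}_\alpha(\theta,\tilde M)\ge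 \mathrm{RS}_\alpha(\theta,M)$ for all $\theta\in\Theta$ with strict inequality for some $\theta$. The efficient quantity is $q_e(\theta)=P^{-1}(\theta)$. The efficient mechanism is $M_e=(r_e,q_e,u_e)$ with $r_e\equiv1$ and $u_e(\theta)=\int_\theta^{\overline\theta}q_e(z)\,dz$. *)

theory Defs
  imports "HOL-Analysis.Analysis"
begin

type_synonym mechanism = "(real \<Rightarrow> real) \<times> (real \<Rightarrow> real) \<times> (real \<Rightarrow> real)"

definition V :: "(real \<Rightarrow> real) \<Rightarrow> real \<Rightarrow> real" where
  "V P q = integral {0..q} P"

definition TS :: "(real \<Rightarrow> real) \<Rightarrow> real \<Rightarrow> real \<Rightarrow> real \<Rightarrow> real" where
  "TS P c \<theta> q = (if q = 0 then 0 else V P q - c - \<theta> * q)"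

definition is_mechanism :: "real set \<Rightarrow> real \<Rightarrow> mechanism \<Rightarrow> bool" where
  "is_mechanism \<Theta> qbar M = (case M of (r, q, u) \<Rightarrow>
     (\<forall>\<theta>\<in>\<Theta>. r \<theta> \<in> {0..1} \<and> q \<theta> \<in> {0..qbar} \<and> (q \<theta> = 0 \<longleftrightarrow> r \<theta> = 0)))"

definition IC :: "real set \<Rightarrow> mechanism \<Rightarrow> bool" where
  "IC \<Theta> M = (case M of (r, q, u) \<Rightarrow>
     (\<forall>\<theta>\<in>\<Theta>. \<forall>\<theta>'\<in>\<Theta>. u \<theta> \<ge> u \<theta>' + (\<theta>' - \<theta>) * q \<theta>' * r \<theta>'))"

definition IR :: "real set \<Rightarrow> mechanism \<Rightarrow> bool" where
  "IR \<Theta> M = (case M of (r, q, u) \<Rightarrow> (\<forall>\<theta>\<in>\<Theta>. u \<theta> \<ge> 0))"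

definition RS :: "(real \<Rightarrow> real) \<Rightarrow> real \<Rightarrow> real \<Rightarrow> real \<Rightarrow> mechanism \<Rightarrow> real" where
  "RS P c \<alpha> \<theta> M = (case M of (r, q, u) \<Rightarrow> r \<theta> * TS P c \<theta> (q \<theta>) - (1 - \<alpha>) * u \<theta>)"

definition dominates ::
  "real set \<Rightarrow> real \<Rightarrow> (real \<Rightarrow> real) \<Rightarrow> real \<Rightarrow> real \<Rightarrow> mechanism \<Rightarrow> mechanism \<Rightarrow> bool" where
  "dominates \<Theta> qbar P c \<alpha> M' M =
     (is_mechanism \<Theta> qbar M' \<and> IC \<Theta> M' \<and> IR \<Theta> M' \<and>
      is_mechanism \<Theta> qbar M \<and> IC \<Theta> M \<and> IR \<Theta> M \<and>
      (\<forall>\<theta>\<in>\<Theta>. RS P c \<alpha> \<theta> M' \<ge> RS P c \<alpha> \<theta> M) \<and>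
      (\<exists>\<theta>\<in>\<Theta>. RS P c \<alpha> \<theta> M' > RS P c \<alpha> \<theta> M))"

definition dominated ::
  "real set \<Rightarrow> real \<Rightarrow> (real \<Rightarrow> real) \<Rightarrow> real \<Rightarrow> real \<Rightarrow> mechanism \<Rightarrow> bool" where
  "dominated \<Theta> qbar P c \<alpha> M = (\<exists>M'. dominates \<Theta> qbar P c \<alpha> M' M)"

definition q_e :: "(real \<Rightarrow> real) \<Rightarrow> real \<Rightarrow> real \<Rightarrow> real" where
  "q_e P qbar \<theta> = the_inv_into {0..qbar} P \<theta>"

definition M_e :: "(real \<Rightarrow> real) \<Rightarrow> real \<Rightarrow> real \<Rightarrow> mechanism" where
  "M_e P qbar \<theta>h = ((\<lambda>_. 1), q_e P qbar, (\<lambda>\<theta>. integral {\<theta>..\<theta>h} (q_e P qbar)))"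

end

theory Submission
  imports Defs
begin

lemma ic_lemma:
  fixes f :: "real \<Rightarrow> real"
  assumes cont: "continuous_on {a..b} f"
    and mono: "\<forall>x\<in>{a..b}. \<forall>y\<in>{a..b}. x \<le> y \<longrightarrow> f y \<le> f x"
    and t: "t \<in> {a..b}" and t': "t' \<in> {a..b}"
  shows "integral {t'..b} f + (t' - t) * f t' * 1 \<le> integral {t..b} f"
proof (cases "t \<le> t'")
  case True
  have int: "f integrable_on {t..b}"
    using cont t by (intro integrable_continuous_interval) (auto intro: continuous_on_subset)
  have "integral {t..t'} f + integral {t'..b} f = integral {t..b} f"
    using True t' int by (intro Henstock_Kurzweil_Integration.integral_combine) auto
  moreover have "integral {t..t'} (\<lambda>_. f t') \<le> integral {t..t'} f"
    using int True t t' mono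
    by (intro integral_le) (auto intro: integrable_on_subinterval)
  moreover have "integral {t..t'} (\<lambda>_. f t') = (t' - t) * f t'" using True by simp
  ultimately show ?thesis by linarith
next
  case False
  have int: "f integrable_on {t'..b}"
    using cont t' by (intro integrable_continuous_interval) (auto intro: continuous_on_subset)
  have "integral {t'..t} f + integral {t..b} f = integral {t'..b} f"
    using False t int by (intro Henstock_Kurzweil_Integration.integral_combine) auto
  moreover have "integral {t'..t} f \<le> integral {t'..t} (\<lambda>_. f t')"
    using int False t t' mono
    by (intro integral_le) (auto intro: integrable_on_subinterval)
  moreover have "integral {t'..t} (\<lambda>_. f t') = (t - t') * f t'" using False by simp
  ultimately show ?thesis by (simp add: algebra_simps)
qed

lemma lin_integral:
  fixes k h t :: real
  assumes "t \<le> h"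
  shows "integral {t..h} (\<lambda>z. k * (h - z)) = k * (h - t)^2 / 2"
proof -
  have "((\<lambda>z. k * (h - z)) has_integral ((\<lambda>z. - (k * (h - z)^2 / 2)) h - (\<lambda>z. - (k * (h - z)^2 / 2)) t)) {t..h}"
    using assms
    by (intro fundamental_theorem_of_calculus)
       (auto simp: has_real_derivative_iff_has_vector_derivative[symmetric] power2_eq_square
             intro!: derivative_eq_intros simp: field_simps)
  then have "((\<lambda>z. k * (h - z)) has_integral (k * (h - t)^2 / 2)) {t..h}" by simp
  then show ?thesis by (rule integral_unique)
qed

lemma aux_ineq:
  fixes In Iq D I1 I2 a b Pa t c \<alpha> :: real
  assumes "In = Iq - D / 2" "I2 \<le> (b - a) * Pa" "(b - a) * (Pa - t) \<le> (1 - \<alpha>) * D / 4"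
  shows "(I1 + I2 - c - t * b) - (1 - \<alpha>) * Iq + (1 - \<alpha>) * D / 4 \<le> (I1 - c - t * a) - (1 - \<alpha>) * In"
proof -
  have e1: "(1 - \<alpha>) * In = (1 - \<alpha>) * Iq - (1 - \<alpha>) * D / 2" unfolding assms(1) by (simp add: algebra_simps)
  have e2: "(b - a) * (Pa - t) = (b - a) * Pa - t * b + t * a" by (simp add: algebra_simps)
  show ?thesis using e1 e2 assms(2,3) by linarith
qed

theorem theorem4:
  fixes \<theta>l \<theta>h c qbar \<alpha> :: real and P P' P'' :: "real \<Rightarrow> real"
  assumes "0 < \<theta>l" "\<theta>l < \<theta>h"
    and "c > 0"
    and "qbar > 0"
    and "continuous_on {0..qbar} P"
    and "strict_antimono_on {0..qbar} P"
    and "\<forall>x\<in>{0..qbar}. P x \<ge> 0"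
    and "P qbar = 0"
    and A2: "\<exists>q\<in>{0..qbar}. P q = \<theta>h \<and> TS P c \<theta>h q > 0"
    and "\<forall>x\<in>{0..qbar}. (P has_real_derivative P' x) (at x within {0..qbar})"
    and "\<forall>x\<in>{0..qbar}. (P' has_real_derivative P'' x) (at x within {0..qbar})"
    and "continuous_on {0..qbar} P''"
    and "0 \<le> \<alpha>" "\<alpha> < 1"
  shows "dominated {\<theta>l..\<theta>h} qbar P c \<alpha> (M_e P qbar \<theta>h)"
proof -
  note contP = assms(5)
  have strict: "\<And>x y. x \<in> {0..qbar} \<Longrightarrow> y \<in> {0..qbar} \<Longrightarrow> x < y \<Longrightarrow> P y < P x"
    using assms(6) by (auto simp: monotone_on_def)
  have anti: "\<And>x y. x \<in> {0..qbar} \<Longrightarrow> y \<in> {0..qbar} \<Longrightarrow> x \<le> y \<Longrightarrow> P y \<le> P x"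
    using strict by (metis order_le_less)
  have inj: "inj_on P {0..qbar}"
    by (rule linorder_inj_onI) (use strict in fastforce)+
  obtain qs where qs: "qs \<in> {0..qbar}" "P qs = \<theta>h" "TS P c \<theta>h qs > 0" using A2 by blast
  have qs0: "qs > 0"
  proof (rule ccontr)
    assume "\<not> qs > 0" then have "qs = 0" using qs by auto
    then show False using qs by (simp add: TS_def)
  qed
  have contP': "continuous_on {0..qbar} P'"
    using assms(11) by (auto simp: continuous_on_eq_continuous_within intro: DERIV_continuous)
  have "bounded (P' ` {0..qbar})"
    by (intro compact_imp_bounded compact_continuous_image contP') auto
  then obtain B where B: "B > 0" "\<forall>x\<in>{0..qbar}. norm (P' x) \<le> B"
    unfolding bounded_pos by auto
  have lip: "\<And>x y. x \<in> {0..qbar} \<Longrightarrow> y \<in> {0..qbar} \<Longrightarrow> norm (P x - P y) \<le> B * norm (x - y)"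
    by (rule field_differentiable_bound[of "{0..qbar}" P P']) (use assms(10) B in auto)
  define qe where "qe = q_e P qbar"
  have QE: "qe t \<in> {qs..qbar} \<and> P (qe t) = t" if t: "t \<in> {\<theta>l..\<theta>h}" for t
  proof -
    have "P qs < P 0" using strict[of 0 qs] qs qs0 by auto
    then have "P qbar \<le> t" "t \<le> P 0" using t qs assms by auto
    then obtain x where x: "0 \<le> x" "x \<le> qbar" "P x = t"
      using IVT2'[of P qbar t 0] contP assms(4) by auto
    have "qe t = x" unfolding qe_def q_e_def
      by (rule the_inv_into_f_eq[OF inj]) (use x in auto)
    moreover have "qs \<le> x"
    proof (rule ccontr)
      assume "\<not> qs \<le> x"
      then have "P qs < P x" using strict[of x qs] x qs by auto
      then show False using x qs t by auto
    qed
    ultimately show ?thesis using x by auto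
  qed
  have qeh: "qe \<theta>h = qs" unfolding qe_def q_e_def
    by (rule the_inv_into_f_eq[OF inj]) (use qs in auto)
  have qe_mono: "qe t2 \<le> qe t1 \<and> t2 - t1 \<le> B * (qe t1 - qe t2)"
    if "t1 \<in> {\<theta>l..\<theta>h}" "t2 \<in> {\<theta>l..\<theta>h}" "t1 \<le> t2" for t1 t2
  proof -
    have a: "qe t1 \<in> {0..qbar}" "qe t2 \<in> {0..qbar}" "P (qe t1) = t1" "P (qe t2) = t2"
      using QE[OF that(1)] QE[OF that(2)] qs by auto
    have le: "qe t2 \<le> qe t1"
    proof (rule ccontr)
      assume "\<not> qe t2 \<le> qe t1"
      then have "P (qe t2) < P (qe t1)" using strict[of "qe t1" "qe t2"] a by auto
      then show False using a that by auto
    qed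
    have "norm (P (qe t2) - P (qe t1)) \<le> B * norm (qe t2 - qe t1)" using a by (intro lip) auto
    then show ?thesis using le a that by auto
  qed
  have cont_qe: "continuous_on {\<theta>l..\<theta>h} qe"
  proof -
    have "continuous_on (P ` {0..qbar}) qe" unfolding qe_def q_e_def
      by (rule continuous_on_inv_into[OF contP _ inj]) auto
    moreover have "{\<theta>l..\<theta>h} \<subseteq> P ` {0..qbar}"
    proof
      fix t assume "t \<in> {\<theta>l..\<theta>h}"
      then show "t \<in> P ` {0..qbar}" using QE[of t] qs by (metis atLeastAtMost_iff image_eqI order_trans)
    qed
    ultimately show ?thesis by (rule continuous_on_subset)
  qed
  have cont_int: "\<And>t. t \<in> {\<theta>l..\<theta>h} \<Longrightarrow> qe integrable_on {t..\<theta>h}"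
    by (rule integrable_continuous_interval, rule continuous_on_subset[OF cont_qe]) auto
  define k where "k = (1 - \<alpha>) / (4 * B)"
  have k0: "k > 0" using B assms(14) by (simp add: k_def)
  have kB: "B * k = (1 - \<alpha>) / 4" using B by (simp add: k_def)
  have kB1: "B * k \<le> 1" using kB assms(13) by simp
  define qn where "qn t = qe t - k * (\<theta>h - t)" for t
  have qn_mono: "\<forall>x\<in>{\<theta>l..\<theta>h}. \<forall>y\<in>{\<theta>l..\<theta>h}. x \<le> y \<longrightarrow> qn y \<le> qn x"
  proof (intro ballI impI)
    fix x y assume xy: "x \<in> {\<theta>l..\<theta>h}" "y \<in> {\<theta>l..\<theta>h}" "x \<le> y"
    from qe_mono[OF xy] have d: "0 \<le> qe x - qe y" "y - x \<le> B * (qe x - qe y)" by auto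
    have "k * (y - x) \<le> k * (B * (qe x - qe y))" using d k0 by (intro mult_left_mono) auto
    also have "\<dots> = (B * k) * (qe x - qe y)" by simp
    also have "\<dots> \<le> 1 * (qe x - qe y)" using kB1 d by (intro mult_right_mono) auto
    finally show "qn y \<le> qn x" unfolding qn_def by (simp add: algebra_simps)
  qed
  have qe_rng: "\<And>t. t \<in> {\<theta>l..\<theta>h} \<Longrightarrow> qs \<le> qe t \<and> qe t \<le> qbar" using QE by auto
  have qe_mono': "\<forall>x\<in>{\<theta>l..\<theta>h}. \<forall>y\<in>{\<theta>l..\<theta>h}. x \<le> y \<longrightarrow> qe y \<le> qe x"
    using qe_mono by blast
  have qn_rng: "qs \<le> qn t \<and> qn t \<le> qe t" if t: "t \<in> {\<theta>l..\<theta>h}" for t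
  proof -
    have "qn \<theta>h \<le> qn t" using qn_mono t assms(2) by auto
    moreover have "qn \<theta>h = qs" using qeh by (simp add: qn_def)
    moreover have "k * (\<theta>h - t) \<ge> 0" using k0 t by auto
    ultimately show ?thesis by (auto simp: qn_def)
  qed
  have cont_qn: "continuous_on {\<theta>l..\<theta>h} qn"
    unfolding qn_def by (intro continuous_intros cont_qe)
  have qn_int: "\<And>t. t \<in> {\<theta>l..\<theta>h} \<Longrightarrow> qn integrable_on {t..\<theta>h}"
    by (rule integrable_continuous_interval, rule continuous_on_subset[OF cont_qn]) auto
  have un: "integral {t..\<theta>h} qn = integral {t..\<theta>h} qe - k * (\<theta>h - t)^2 / 2"
    if t: "t \<in> {\<theta>l..\<theta>h}" for t
  proof -
    have "integral {t..\<theta>h} qn = integral {t..\<theta>h} (\<lambda>z. qe z - k * (\<theta>h - z))"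
      by (simp add: qn_def[abs_def])
    also have "\<dots> = integral {t..\<theta>h} qe - integral {t..\<theta>h} (\<lambda>z. k * (\<theta>h - z))"
      by (rule integral_diff[OF cont_int[OF t]])
         (rule integrable_continuous_interval, intro continuous_intros)
    also have "\<dots> = integral {t..\<theta>h} qe - k * (\<theta>h - t)^2 / 2"
      using t lin_integral[of t "\<theta>h" k] by simp
    finally show ?thesis .
  qed
  have intP: "\<And>x. x \<in> {0..qbar} \<Longrightarrow> P integrable_on {0..x}"
    by (rule integrable_continuous_interval, rule continuous_on_subset[OF contP]) auto
  have key: "TS P c t (qe t) - (1 - \<alpha>) * integral {t..\<theta>h} qe + (1 - \<alpha>) * k * (\<theta>h - t)^2 / 4
      \<le> TS P c t (qn t) - (1 - \<alpha>) * integral {t..\<theta>h} qn"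
    if t: "t \<in> {\<theta>l..\<theta>h}" for t
  proof -
    define a where "a = qn t"
    define b where "b = qe t"
    define \<delta> where "\<delta> = \<theta>h - t"
    have ab: "0 < a" "a \<le> b" "b \<le> qbar" "b - a = k * \<delta>"
      using qn_rng[OF t] qe_rng[OF t] qs0 by (auto simp: a_def b_def qn_def \<delta>_def)
    have Pb: "P b = t" using QE[OF t] by (simp add: b_def)
    have comb: "integral {0..a} P + integral {a..b} P = integral {0..b} P"
      using ab by (intro Henstock_Kurzweil_Integration.integral_combine intP) auto
    have Ile: "integral {a..b} P \<le> integral {a..b} (\<lambda>_. P a)"
      using ab
      by (intro integral_le integrable_on_subinterval[OF intP[of b]] anti) auto
    have Ic: "integral {a..b} (\<lambda>_. P a) = (b - a) * P a" using ab by simp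
    have "norm (P a - P b) \<le> B * norm (a - b)" using ab by (intro lip) auto
    then have Pa: "P a - t \<le> B * (b - a)" using ab Pb by auto
    have m: "(b - a) * (P a - t) \<le> (b - a) * (B * (b - a))"
      using Pa ab by (intro mult_left_mono) auto
    have e: "(b - a) * (B * (b - a)) = (1 - \<alpha>) * k * \<delta>^2 / 4"
    proof -
      have "(b - a) * (B * (b - a)) = (B * k) * (k * \<delta>^2)"
        using ab(4) by (simp add: power2_eq_square)
      then show ?thesis using kB by simp
    qed
    have TSa: "TS P c t a = V P a - c - t * a" using ab by (simp add: TS_def)
    have TSb: "TS P c t b = V P b - c - t * b" using ab by (simp add: TS_def)
    have "integral {t..\<theta>h} qn = integral {t..\<theta>h} qe - k * \<delta>^2 / 2"
      using un[OF t] by (simp add: \<delta>_def)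
    then have "(integral {0..a} P + integral {a..b} P - c - t * b) - (1 - \<alpha>) * integral {t..\<theta>h} qe + (1 - \<alpha>) * (k * \<delta>^2) / 4
       \<le> (integral {0..a} P - c - t * a) - (1 - \<alpha>) * integral {t..\<theta>h} qn"
      using Ile Ic m e by (intro aux_ineq[where Pa = "P a"]) (auto simp: algebra_simps)
    then show ?thesis
      unfolding a_def[symmetric] b_def[symmetric] \<delta>_def[symmetric] TSa TSb V_def
      using comb by (simp add: algebra_simps)
  qed
  define Mn where "Mn = ((\<lambda>_::real. 1::real), qn, (\<lambda>t. integral {t..\<theta>h} qn))"
  have Me: "M_e P qbar \<theta>h = ((\<lambda>_::real. 1::real), qe, (\<lambda>t. integral {t..\<theta>h} qe))"
    by (simp add: M_e_def qe_def)
  have mech1: "is_mechanism {\<theta>l..\<theta>h} qbar Mn"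
    unfolding is_mechanism_def Mn_def using qn_rng qe_rng qs0
    by (auto intro: order_trans) (fastforce)+
  have mech2: "is_mechanism {\<theta>l..\<theta>h} qbar (M_e P qbar \<theta>h)"
    unfolding is_mechanism_def Me using qe_rng qs0
    by (auto intro: order_trans) (fastforce)+
  have ic1: "IC {\<theta>l..\<theta>h} Mn"
    unfolding IC_def Mn_def using ic_lemma[OF cont_qn qn_mono] by auto
  have ic2: "IC {\<theta>l..\<theta>h} (M_e P qbar \<theta>h)"
    unfolding IC_def Me using ic_lemma[OF cont_qe qe_mono'] by auto
  have ir1: "IR {\<theta>l..\<theta>h} Mn"
    unfolding IR_def Mn_def using qn_rng qs0 qn_int
    by (auto intro!: integral_nonneg) (meson atLeastAtMost_iff order_trans less_imp_le)
  have ir2: "IR {\<theta>l..\<theta>h} (M_e P qbar \<theta>h)"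
    unfolding IR_def Me using qe_rng qs0 cont_int
    by (auto intro!: integral_nonneg) (meson atLeastAtMost_iff order_trans less_imp_le)
  have rs: "RS P c \<alpha> t Mn - RS P c \<alpha> t (M_e P qbar \<theta>h) \<ge> (1 - \<alpha>) * k * (\<theta>h - t)^2 / 4"
    if t: "t \<in> {\<theta>l..\<theta>h}" for t
    using key[OF t] unfolding RS_def Mn_def Me by simp
  have pos: "(1 - \<alpha>) * k * (\<theta>h - \<theta>l)^2 / 4 > 0"
    using assms(2,14) k0 by simp
  show ?thesis
    unfolding dominated_def dominates_def
  proof (intro exI[of _ Mn] conjI mech1 mech2 ic1 ic2 ir1 ir2)
    show "\<forall>t\<in>{\<theta>l..\<theta>h}. RS P c \<alpha> t (M_e P qbar \<theta>h) \<le> RS P c \<alpha> t Mn"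
    proof
      fix t assume t: "t \<in> {\<theta>l..\<theta>h}"
      have "(1 - \<alpha>) * k * (\<theta>h - t)^2 / 4 \<ge> 0" using k0 assms(14) by simp
      then show "RS P c \<alpha> t (M_e P qbar \<theta>h) \<le> RS P c \<alpha> t Mn" using rs[OF t] by linarith
    qed
    show "\<exists>t\<in>{\<theta>l..\<theta>h}. RS P c \<alpha> t (M_e P qbar \<theta>h) < RS P c \<alpha> t Mn"
      using rs[of \<theta>l] pos assms(2) by (intro bexI[of _ \<theta>l]) auto
  qed
qed

end
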